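(* Let $\mathcal{H}$ be a complex separable Hilbert space, $A\in\mathcal{B}(\mathcal{H})$ and $\mathcal{G}\subset\mathcal{H}$ a countable Bessel system. Suppose that there is $C>0$ with $\sum_{g\in\mathcal{G}}\int_0^\infty|\langle f,e^{tA}g\rangle|^2dt\le C\|f\|^2$ for all $f\in\mathcal{H}$, and that for some $0<L<\infty$ the system $\{e^{tA}g\}_{g\in\mathcal{G},\,t\in[0,L]}$ is a semi-continuous frame for $\mathcal{H}$. Then $\{e^{tA}\}_{t\ge0}$ is exponentially stable.
   Context: For $A\in\mathcal{B}(\mathcal{H})$, $e^{tA}:=\sum_{n\ge0}\frac{t^n}{n!}A^n$. The semigroup $\{e^{tA}\}_{t\ge0}$ is exponentially stable if there are constants $M\ge1$ and $\omega<0$ with $\|e^{tA}\|\le Me^{\omega t}$ for all $t\ge0$. A countable family $\{f_k\}\subset\mathcal{H}$ is a Bessel system if there is $C>0$ with $\sum_k|\langle f,f_k\rangle|^2\le C\|f\|^2$ for all $f\in\mathcal{H}$. For a countable $\mathcal{G}\subset\mathcal{H}$ and an interval $\mathcal{T}\subset[0,\infty)$, $\{e^{tA}g\}_{g\in\mathcal{G},t\in\mathcal{T}}$ is a semi-continuous frame for $\mathcal{H}$ if there are constants $c,C>0$ such that $c\|f\|^2\le\sum_{g\in\mathcal{G}}\int_{\mathcal{T}}|\langle f,e^{tA}g\rangle|^2\,dt\le C\|f\|^2$ for all $f\in\mathcal{H}$. *)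

theory Defs
  imports "HOL-Analysis.Analysis"
begin

text \<open>The main library only has real inner product spaces, so we
introduce complex Hilbert spaces as real Banach spaces equipped with a complex scalar
multiplication (compatible with the real one) and a complex inner product
(linear in the first argument, conjugate-symmetric) that induces the norm.\<close>

class complex_hilbert = banach +
  fixes scaleC :: "complex \<Rightarrow> 'a \<Rightarrow> 'a"
    and cinner :: "'a \<Rightarrow> 'a \<Rightarrow> complex"
  assumes scaleC_of_real: "scaleC (complex_of_real r) x = scaleR r x"
    and scaleC_add_right: "scaleC a (x + y) = scaleC a x + scaleC a y"
    and scaleC_add_left: "scaleC (a + b) x = scaleC a x + scaleC b x"
    and scaleC_scaleC: "scaleC a (scaleC b x) = scaleC (a * b) x"
    and cinner_commute: "cinner x y = cnj (cinner y x)"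
    and cinner_add_left: "cinner (x + y) z = cinner x z + cinner y z"
    and cinner_scaleC_left: "cinner (scaleC a x) y = a * cinner x y"
    and norm_eq_sqrt_cinner: "norm x = sqrt (Re (cinner x x))"

instantiation complex :: complex_hilbert
begin
definition scaleC_complex :: "complex \<Rightarrow> complex \<Rightarrow> complex" where
  "scaleC_complex a x = a * x"
definition cinner_complex :: "complex \<Rightarrow> complex \<Rightarrow> complex" where
  "cinner_complex x y = x * cnj y"
instance
proof
  fix x y z :: complex and a b :: complex and r :: real
  show "scaleC (complex_of_real r) x = r *\<^sub>R x" by (simp add: scaleC_complex_def scaleR_conv_of_real)
  show "scaleC a (x + y) = scaleC a x + scaleC a y" by (simp add: scaleC_complex_def algebra_simps)
  show "scaleC (a + b) x = scaleC a x + scaleC b x" by (simp add: scaleC_complex_def algebra_simps)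
  show "scaleC a (scaleC b x) = scaleC (a * b) x" by (simp add: scaleC_complex_def)
  show "cinner x y = cnj (cinner y x)" by (simp add: cinner_complex_def)
  show "cinner (x + y) z = cinner x z + cinner y z" by (simp add: cinner_complex_def algebra_simps)
  show "cinner (scaleC a x) y = a * cinner x y" by (simp add: cinner_complex_def scaleC_complex_def)
  show "norm x = sqrt (Re (cinner x x))"
    by (simp add: cinner_complex_def complex_mult_cnj cmod_def power2_eq_square)
qed
end

definition separable_type :: "'a::topological_space itself \<Rightarrow> bool" where
  "separable_type _ \<longleftrightarrow> (\<exists>D::'a set. countable D \<and> closure D = UNIV)"

definition bounded_clinear_op :: "('a::complex_hilbert \<Rightarrow> 'a) \<Rightarrow> bool" where
  "bounded_clinear_op A \<longleftrightarrow> bounded_linear A \<and> (\<forall>c x. A (scaleC c x) = scaleC c (A x))"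

definition op_exp :: "real \<Rightarrow> ('a::real_normed_vector \<Rightarrow> 'a) \<Rightarrow> 'a \<Rightarrow> 'a" where
  "op_exp t A f = (\<Sum>n. (t ^ n / fact n) *\<^sub>R (A ^^ n) f)"

definition exp_stable :: "('a::real_normed_vector \<Rightarrow> 'a) \<Rightarrow> bool" where
  "exp_stable A \<longleftrightarrow> (\<exists>M::real. \<exists>\<omega>::real. M \<ge> 1 \<and> \<omega> < 0 \<and>
      (\<forall>t\<ge>0. onorm (op_exp t A) \<le> M * exp (\<omega> * t)))"

definition bessel_system :: "'a::complex_hilbert set \<Rightarrow> bool" where
  "bessel_system G \<longleftrightarrow> (\<exists>C>0. \<forall>f.
      (\<Sum>\<^sub>\<infinity>g\<in>G. ennreal ((cmod (cinner f g))\<^sup>2)) \<le> ennreal (C * (norm f)\<^sup>2))"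

definition orbit_energy :: "('a::complex_hilbert \<Rightarrow> 'a) \<Rightarrow> 'a set \<Rightarrow> real set \<Rightarrow> 'a \<Rightarrow> ennreal" where
  "orbit_energy A G T f =
     (\<Sum>\<^sub>\<infinity>g\<in>G. \<integral>\<^sup>+ t\<in>T. ennreal ((cmod (cinner f (op_exp t A g)))\<^sup>2) \<partial>lborel)"

definition semi_continuous_frame :: "('a::complex_hilbert \<Rightarrow> 'a) \<Rightarrow> 'a set \<Rightarrow> real set \<Rightarrow> bool" where
  "semi_continuous_frame A G T \<longleftrightarrow> (\<exists>c>0. \<exists>C>0. \<forall>f.
      ennreal (c * (norm f)\<^sup>2) \<le> orbit_energy A G T f \<and>
      orbit_energy A G T f \<le> ennreal (C * (norm f)\<^sup>2))"

end

theory Submission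
  imports Defs
begin

lemma cinner_zero_left[simp]: "cinner 0 (y::'a::complex_hilbert) = 0"
  using cinner_add_left[of "0::'a" 0 y] by simp

lemma cinner_minus_left: "cinner (- x) (y::'a::complex_hilbert) = - cinner x y"
  using cinner_add_left[of x "-x" y] by (metis neg_eq_iff_add_eq_0 add.right_inverse cinner_zero_left)

lemma cinner_diff_left: "cinner (x - z) (y::'a::complex_hilbert) = cinner x y - cinner z y"
  using cinner_add_left[of x "-z" y] by (simp add: cinner_minus_left)

lemma cinner_add_right: "cinner (x::'a::complex_hilbert) (y + z) = cinner x y + cinner x z"
  by (metis cinner_add_left cinner_commute complex_cnj_add)

lemma cinner_zero_right[simp]: "cinner (x::'a::complex_hilbert) 0 = 0"
  by (metis cinner_commute cinner_zero_left complex_cnj_zero)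

lemma cinner_diff_right: "cinner (x::'a::complex_hilbert) (y - z) = cinner x y - cinner x z"
  by (metis cinner_commute cinner_diff_left complex_cnj_diff)

lemma cinner_scaleC_right: "cinner (x::'a::complex_hilbert) (scaleC a y) = cnj a * cinner x y"
  by (metis cinner_commute cinner_scaleC_left complex_cnj_mult)

lemma cinner_scaleR_left: "cinner (r *\<^sub>R x) (y::'a::complex_hilbert) = of_real r * cinner x y"
  by (metis cinner_scaleC_left scaleC_of_real)

lemma cinner_scaleR_right: "cinner (x::'a::complex_hilbert) (r *\<^sub>R y) = of_real r * cinner x y"
  by (metis cinner_scaleC_right scaleC_of_real complex_cnj_complex_of_real)

lemma cinner_self_Im: "Im (cinner x (x::'a::complex_hilbert)) = 0"
  using cinner_commute[of x x] by (metis cnj.sel(2) equation_minus_iff zero_complex.sel(2) complex_cnj_zero_iff neg_equal_zero)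

lemma cinner_self_Re: "Re (cinner x (x::'a::complex_hilbert)) = (norm x)\<^sup>2"
proof -
  have "Re (cinner x x) \<ge> 0" by (metis norm_ge_zero norm_eq_sqrt_cinner real_sqrt_ge_0_iff)
  thus ?thesis by (simp add: norm_eq_sqrt_cinner)
qed

lemma cinner_self: "cinner x (x::'a::complex_hilbert) = of_real ((norm x)\<^sup>2)"
  by (simp add: complex_eqI cinner_self_Im cinner_self_Re)

lemma norm_scaleC: "norm (scaleC c (x::'a::complex_hilbert)) = cmod c * norm x"
proof -
  have "cinner (scaleC c x) (scaleC c x) = c * cnj c * cinner x x"
    by (simp add: cinner_scaleC_left cinner_scaleC_right mult.assoc)
  hence "(norm (scaleC c x))\<^sup>2 = Re (c * cnj c * cinner x x)"
    by (metis cinner_self_Re)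
  also have "\<dots> = Re (of_real ((cmod c)\<^sup>2) * of_real ((norm x)\<^sup>2))"
    by (simp only: complex_norm_square cinner_self)
  also have "\<dots> = (cmod c * norm x)\<^sup>2"
    by (simp add: power_mult_distrib)
  finally show ?thesis
    by (simp add: power2_eq_iff_nonneg)
qed

lemma scaleC_scaleR: "scaleC c (r *\<^sub>R (x::'a::complex_hilbert)) = r *\<^sub>R scaleC c x"
  by (metis scaleC_of_real scaleC_scaleC mult.commute)

lemma scaleC_zero: "scaleC c (0::'a::complex_hilbert) = 0"
  using scaleC_add_right[of c "0::'a" 0] by simp

lemma bounded_linear_scaleC: "bounded_linear (scaleC c :: 'a::complex_hilbert \<Rightarrow> 'a)"
  by (rule bounded_linear_intro[where K="cmod c"])
     (simp_all add: scaleC_add_right scaleC_scaleR norm_scaleC)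

definition ip :: "'a::complex_hilbert \<Rightarrow> 'a \<Rightarrow> real" where
  "ip x y = Re (cinner x y)"

lemma ip_sym: "ip x y = ip y x"
  by (metis ip_def cinner_commute cnj.sel(1))

lemma norm_add_sq: "(norm (x + y))\<^sup>2 = (norm x)\<^sup>2 + 2 * ip x y + (norm (y::'a::complex_hilbert))\<^sup>2"
proof -
  have "(norm (x + y))\<^sup>2 = Re (cinner x x + cinner x y + (cinner y x + cinner y y))"
    by (simp add: cinner_self_Re[symmetric] cinner_add_left cinner_add_right)
  thus ?thesis using ip_sym[of x y] by (simp add: ip_def cinner_self_Re)
qed

lemma norm_diff_sq: "(norm (x - y))\<^sup>2 = (norm x)\<^sup>2 - 2 * ip x y + (norm (y::'a::complex_hilbert))\<^sup>2"
  using norm_add_sq[of x "-y"]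
  by (simp add: ip_def cinner_add_right[symmetric] cinner_diff_right[symmetric])
     (metis cinner_diff_right cinner_zero_right diff_0 minus_complex.sel(1) zero_complex.sel(1) add.commute)

lemma ip_scaleR_right: "ip x (r *\<^sub>R y) = r * ip (x::'a::complex_hilbert) y"
  by (simp add: ip_def cinner_scaleR_right)

lemma ip_cs: "\<bar>ip x y\<bar> \<le> norm x * norm (y::'a::complex_hilbert)"
proof (cases "y = 0")
  case True thus ?thesis by (simp add: ip_def)
next
  case False
  hence q: "norm y > 0" by simp
  define r where "r = - ip x y / (norm y)\<^sup>2"
  have "0 \<le> (norm (x + r *\<^sub>R y))\<^sup>2" by simp
  also have "\<dots> = (norm x)\<^sup>2 + 2 * r * ip x y + r\<^sup>2 * (norm y)\<^sup>2"
    by (simp add: norm_add_sq ip_scaleR_right power_mult_distrib)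
  also have "\<dots> = (norm x)\<^sup>2 - (ip x y)\<^sup>2 / (norm y)\<^sup>2"
    using q by (simp add: r_def field_simps power2_eq_square)
  finally have "(ip x y)\<^sup>2 \<le> (norm x * norm y)\<^sup>2"
    using q by (simp add: field_simps power_mult_distrib)
  thus ?thesis using power2_le_imp_le[of "\<bar>ip x y\<bar>" "norm x * norm y"] by simp
qed

lemma cinner_cs: "cmod (cinner x y) \<le> norm x * norm (y::'a::complex_hilbert)"
proof (cases "cinner x y = 0")
  case True thus ?thesis by simp
next
  case False
  define u where "u = cnj (cinner x y) / of_real (cmod (cinner x y))"
  have cu: "cmod u = 1" using False by (simp add: u_def norm_divide)
  have "cinner (scaleC u x) y = of_real (cmod (cinner x y))"
    using False by (simp add: u_def cinner_scaleC_left complex_norm_square[symmetric] power2_eq_square field_simps)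
  hence "cmod (cinner x y) = ip (scaleC u x) y" by (simp add: ip_def)
  also have "\<dots> \<le> norm (scaleC u x) * norm y" using ip_cs by (metis abs_le_D1)
  finally show ?thesis by (simp add: norm_scaleC cu)
qed

lemma bounded_linear_cinner_left: "bounded_linear (\<lambda>x. cinner (x::'a::complex_hilbert) y)"
  by (rule bounded_linear_intro[where K="norm y"])
     (simp_all add: cinner_add_left cinner_scaleR_left scaleR_conv_of_real cinner_cs)

lemma bounded_linear_cinner_right: "bounded_linear (\<lambda>y. cinner (x::'a::complex_hilbert) y)"
  by (rule bounded_linear_intro[where K="norm x"])
     (simp_all add: cinner_add_right cinner_scaleR_right scaleR_conv_of_real, metis cinner_cs mult.commute)


lemma ip_add_left: "ip (x + y) z = ip x z + ip (y::'a::complex_hilbert) z"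
  by (simp add: ip_def cinner_add_left)
lemma ip_diff_left: "ip (x - y) z = ip x z - ip (y::'a::complex_hilbert) z"
  by (simp add: ip_def cinner_diff_left)
lemma ip_scaleR_left: "ip (r *\<^sub>R x) z = r * ip (x::'a::complex_hilbert) z"
  by (simp add: ip_def cinner_scaleR_left)
lemma ip_self: "ip x x = (norm (x::'a::complex_hilbert))\<^sup>2"
  by (simp add: ip_def cinner_self_Re)

lemma parallelogram: "(norm (x + y))\<^sup>2 + (norm (x - y))\<^sup>2 = 2 * (norm x)\<^sup>2 + 2 * (norm (y::'a::complex_hilbert))\<^sup>2"
  by (simp add: norm_add_sq norm_diff_sq)

lemma riesz_real:
  fixes \<psi> :: "'a::complex_hilbert \<Rightarrow> real"
  assumes bl: "bounded_linear \<psi>"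
  shows "\<exists>z. \<forall>x. \<psi> x = ip x z"
proof (cases "\<forall>x. \<psi> x = 0")
  case True thus ?thesis by (intro exI[of _ 0]) (simp add: ip_def)
next
  case False
  interpret \<psi>: bounded_linear \<psi> by fact
  from False obtain x1 where x1: "\<psi> x1 \<noteq> 0" by auto
  define S where "S = {x. \<psi> x = 1}"
  have x1S: "x1 /\<^sub>R \<psi> x1 \<in> S" using x1 by (simp add: S_def \<psi>.scale)
  define d where "d = Inf (norm ` S)"
  have bdd: "bdd_below (norm ` S)" by (rule bdd_belowI[of _ 0]) auto
  have d_le: "d \<le> norm y" if "y \<in> S" for y
    unfolding d_def using bdd that by (intro cInf_lower) auto
  have d0: "0 \<le> d" unfolding d_def using x1S by (intro cInf_greatest) auto
  have "\<exists>x\<in>S. norm x < d + 1 / (real n + 1)" for n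
  proof -
    have "Inf (norm ` S) < d + 1 / (real n + 1)" by (simp add: d_def)
    then obtain v where "v \<in> norm ` S" "v < d + 1 / (real n + 1)"
      using x1S by (subst (asm) cInf_less_iff) (auto intro: bdd)
    thus ?thesis by auto
  qed
  then obtain xs where xsS: "\<And>n. xs n \<in> S" and xsn: "\<And>n. norm (xs n) < d + 1 / (real n + 1)"
    by metis
  have mid: "2 * d \<le> norm (x + y)" if "x \<in> S" "y \<in> S" for x y
  proof -
    have "(1/2) *\<^sub>R (x + y) \<in> S" using that by (simp add: S_def \<psi>.scale \<psi>.add)
    hence "d \<le> norm ((1/2) *\<^sub>R (x + y))" by (rule d_le)
    thus ?thesis by simp
  qed
  have close: "(norm (x - y))\<^sup>2 \<le> (8 * d + 4) * e"
    if "x \<in> S" "y \<in> S" "norm x < d + e" "norm y < d + e" "0 < e" "e \<le> 1" for x y e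
  proof -
    have "(2 * d)\<^sup>2 \<le> (norm (x + y))\<^sup>2" by (rule power_mono[OF mid[OF that(1,2)]]) (use d0 in simp)
    moreover have "(norm x)\<^sup>2 \<le> (d + e)\<^sup>2" "(norm y)\<^sup>2 \<le> (d + e)\<^sup>2"
      using that d0 by (auto intro!: power_mono)
    moreover note parallelogram[of x y]
    ultimately have "(norm (x - y))\<^sup>2 \<le> 4 * (d + e)\<^sup>2 - 4 * d\<^sup>2" by (simp add: power_mult_distrib)
    also have "\<dots> = 8 * d * e + 4 * e * e" by (simp add: power2_eq_square algebra_simps)
    also have "\<dots> \<le> 8 * d * e + 4 * e" using that by (simp add: mult_left_le)
    finally show ?thesis by (simp add: algebra_simps)
  qed
  have "Cauchy xs"
  proof (rule metric_CauchyI)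
    fix \<epsilon> :: real assume \<epsilon>: "0 < \<epsilon>"
    define e where "e = min 1 (\<epsilon>\<^sup>2 / (8 * d + 5))"
    have e0: "0 < e" "e \<le> 1" using \<epsilon> d0 by (auto simp: e_def)
    have eb: "(8 * d + 4) * e < \<epsilon>\<^sup>2"
    proof -
      have "(8 * d + 4) * e < (8 * d + 5) * e" using e0 by simp
      also have "\<dots> \<le> (8 * d + 5) * (\<epsilon>\<^sup>2 / (8 * d + 5))"
        using d0 by (intro mult_left_mono) (auto simp: e_def)
      also have "\<dots> = \<epsilon>\<^sup>2" using d0 by simp
      finally show ?thesis .
    qed
    obtain N where N: "inverse (real (Suc N)) < e" using reals_Archimedean e0 by blast
    show "\<exists>M. \<forall>m\<ge>M. \<forall>n\<ge>M. dist (xs m) (xs n) < \<epsilon>"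
    proof (intro exI allI impI)
      fix m n assume mn: "N \<le> m" "N \<le> n"
      have le: "1 / (real k + 1) < e" if "N \<le> k" for k
      proof -
        have "1 / (real k + 1) \<le> 1 / (real N + 1)" using that by (intro divide_left_mono) auto
        thus ?thesis using N by (simp add: inverse_eq_divide add.commute)
      qed
      have "norm (xs m) < d + e" using xsn[of m] le[OF mn(1)] by linarith
      moreover have "norm (xs n) < d + e" using xsn[of n] le[OF mn(2)] by linarith
      ultimately have "(norm (xs m - xs n))\<^sup>2 < \<epsilon>\<^sup>2"
        using close[OF xsS xsS _ _ e0] eb by fastforce
      hence "norm (xs m - xs n) < \<epsilon>" using \<epsilon> by (simp add: power_less_imp_less_base)
      thus "dist (xs m) (xs n) < \<epsilon>" by (simp add: dist_norm)
    qed
  qed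
  then obtain x0 where lim: "xs \<longlonglongrightarrow> x0" using Cauchy_convergent_iff convergent_def by blast
  have "(\<lambda>n. \<psi> (xs n)) \<longlonglongrightarrow> \<psi> x0" by (rule \<psi>.tendsto[OF lim])
  moreover have "(\<lambda>n. \<psi> (xs n)) = (\<lambda>n. 1)" using xsS by (auto simp: S_def)
  ultimately have x0S: "\<psi> x0 = 1" using LIMSEQ_unique tendsto_const by metis
  have x0min: "norm x0 \<le> norm y" if "y \<in> S" for y
  proof -
    have "(\<lambda>n. norm (xs n)) \<longlonglongrightarrow> norm x0" by (rule tendsto_norm[OF lim])
    moreover have "(\<lambda>n. d + 1 / (real n + 1)) \<longlonglongrightarrow> d + 0"
      by (intro tendsto_add tendsto_const)
        (use LIMSEQ_inverse_real_of_nat in \<open>simp add: inverse_eq_divide add.commute\<close>)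
    ultimately have "norm x0 \<le> d + 0" by (rule LIMSEQ_le) (use xsn less_imp_le in blast)
    thus ?thesis using d_le[OF that] by simp
  qed
  have orth: "ip x0 y = 0" if "\<psi> y = 0" for y
  proof (rule ccontr)
    assume p: "ip x0 y \<noteq> 0"
    define q where "q = (norm y)\<^sup>2"
    define r where "r = - ip x0 y / (q + 1)"
    have q0: "0 \<le> q" by (simp add: q_def)
    have "x0 + r *\<^sub>R y \<in> S" using x0S that by (simp add: S_def \<psi>.add \<psi>.scale)
    hence "(norm x0)\<^sup>2 \<le> (norm (x0 + r *\<^sub>R y))\<^sup>2" using x0min by (simp add: power_mono)
    also have "\<dots> = (norm x0)\<^sup>2 + 2 * r * ip x0 y + r\<^sup>2 * q"
      by (simp add: norm_add_sq ip_scaleR_right q_def power_mult_distrib)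
    finally have A: "0 \<le> 2 * r * ip x0 y + r\<^sup>2 * q" by simp
    have "r\<^sup>2 * q = (ip x0 y)\<^sup>2 * (q / (q + 1)) / (q + 1)"
      using q0 by (simp add: r_def power2_eq_square field_simps)
    also have "\<dots> \<le> (ip x0 y)\<^sup>2 * 1 / (q + 1)"
      using q0 by (intro divide_right_mono mult_left_mono) auto
    finally have B: "r\<^sup>2 * q \<le> (ip x0 y)\<^sup>2 / (q + 1)" by simp
    have C: "2 * r * ip x0 y = - 2 * (ip x0 y)\<^sup>2 / (q + 1)"
      by (simp add: r_def power2_eq_square)
    have "0 < (ip x0 y)\<^sup>2 / (q + 1)" using p q0 by simp
    thus False using A B C by linarith
  qed
  have x0nz: "x0 \<noteq> 0" using x0S by auto
  define z where "z = (1 / (norm x0)\<^sup>2) *\<^sub>R x0"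
  show ?thesis
  proof (intro exI allI)
    fix x
    have "\<psi> (x - \<psi> x *\<^sub>R x0) = 0" using x0S by (simp add: \<psi>.diff \<psi>.scale)
    hence "ip x0 (x - \<psi> x *\<^sub>R x0) = 0" by (rule orth)
    hence "ip x x0 = \<psi> x * (norm x0)\<^sup>2"
      by (simp add: ip_sym[of x0] ip_diff_left ip_scaleR_left ip_self)
    thus "\<psi> x = ip x z" using x0nz by (simp add: z_def ip_scaleR_right)
  qed
qed

definition clinear_bounded :: "('a::complex_hilbert \<Rightarrow> complex) \<Rightarrow> bool" where
  "clinear_bounded \<phi> \<longleftrightarrow> bounded_linear \<phi> \<and> (\<forall>c x. \<phi> (scaleC c x) = c * \<phi> x)"

lemma riesz:
  fixes \<phi> :: "'a::complex_hilbert \<Rightarrow> complex"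
  assumes bl: "bounded_linear \<phi>" and cl: "\<And>c x. \<phi> (scaleC c x) = c * \<phi> x"
  shows "\<exists>z. \<forall>x. \<phi> x = cinner x z"
proof -
  have "bounded_linear (\<lambda>x. Re (\<phi> x))"
    using bounded_linear_compose[OF bounded_linear_Re bl] by (simp add: o_def)
  then obtain z where z: "\<And>x. Re (\<phi> x) = ip x z" using riesz_real by blast
  show ?thesis
  proof (intro exI allI complex_eqI)
    fix x
    show "Re (\<phi> x) = Re (cinner x z)" by (simp add: z ip_def)
    have "Re (\<phi> (scaleC \<i> x)) = Re (cinner (scaleC \<i> x) z)" by (simp add: z ip_def)
    thus "Im (\<phi> x) = Im (cinner x z)" by (simp add: cl cinner_scaleC_left)
  qed
qed

lemma cinner_eq_imp_eq:
  assumes "\<And>x. cinner h1 x = cinner h2 (x::'a::complex_hilbert)"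
  shows "h1 = h2"
proof -
  have "cinner (h1 - h2) (h1 - h2) = 0" using assms by (simp add: cinner_diff_left)
  hence "norm (h1 - h2) = 0" by (simp add: cinner_self)
  thus ?thesis by simp
qed


typedef (overloaded) 'a bop = "UNIV :: ('a::real_normed_vector \<Rightarrow>\<^sub>L 'a) set"
  morphisms rep_bop abs_bop by simp

setup_lifting type_definition_bop

instantiation bop :: (real_normed_vector) real_normed_algebra
begin
lift_definition zero_bop :: "'a bop" is 0 .
lift_definition plus_bop :: "'a bop \<Rightarrow> 'a bop \<Rightarrow> 'a bop" is "(+)" .
lift_definition minus_bop :: "'a bop \<Rightarrow> 'a bop \<Rightarrow> 'a bop" is "(-)" .
lift_definition uminus_bop :: "'a bop \<Rightarrow> 'a bop" is "uminus" .
lift_definition scaleR_bop :: "real \<Rightarrow> 'a bop \<Rightarrow> 'a bop" is "scaleR" .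
lift_definition norm_bop :: "'a bop \<Rightarrow> real" is norm .
lift_definition times_bop :: "'a bop \<Rightarrow> 'a bop \<Rightarrow> 'a bop" is "blinfun_compose" .
lift_definition sgn_bop :: "'a bop \<Rightarrow> 'a bop" is sgn .
lift_definition dist_bop :: "'a bop \<Rightarrow> 'a bop \<Rightarrow> real" is dist .
definition uniformity_bop :: "('a bop \<times> 'a bop) filter" where
  "uniformity_bop = (INF e\<in>{0<..}. principal {(x, y). dist (rep_bop x) (rep_bop y) < e})"
definition open_bop :: "'a bop set \<Rightarrow> bool" where
  "open_bop U = (\<forall>x\<in>U. \<forall>\<^sub>F (x', y) in (INF e\<in>{0<..}. principal {(x, y). dist (rep_bop x) (rep_bop y) < e}). x' = x \<longrightarrow> y \<in> U)"
instance
proof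
  fix a b c :: "'a bop" and r s :: real
  show "a + b + c = a + (b + c)" by transfer (simp add: add.assoc)
  show "a + b = b + a" by transfer (simp add: add.commute)
  show "0 + a = a" by transfer simp
  show "- a + a = 0" by transfer simp
  show "a - b = a + - b" by transfer simp
  show "r *\<^sub>R (a + b) = r *\<^sub>R a + r *\<^sub>R b" by transfer (simp add: scaleR_add_right)
  show "(r + s) *\<^sub>R a = r *\<^sub>R a + s *\<^sub>R a" by transfer (simp add: scaleR_add_left)
  show "r *\<^sub>R s *\<^sub>R a = (r * s) *\<^sub>R a" by transfer simp
  show "1 *\<^sub>R a = a" by transfer simp
  show "dist a b = norm (a - b)" by transfer (simp add: dist_norm)
  show "sgn a = inverse (norm a) *\<^sub>R a" by transfer (simp add: sgn_div_norm)
  show "(uniformity :: ('a bop \<times> 'a bop) filter) = (INF e\<in>{0<..}. principal {(x, y). dist x y < e})"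
    by (simp add: uniformity_bop_def dist_bop.rep_eq)
  show "(norm a = 0) = (a = 0)" by transfer simp
  show "norm (a + b) \<le> norm a + norm b" by transfer (rule norm_triangle_ineq)
  show "norm (r *\<^sub>R a) = \<bar>r\<bar> * norm a" by transfer simp
  show "a * b * c = a * (b * c)" by transfer (simp add: blinfun_eqI)
  show "(a + b) * c = a * c + b * c" by transfer (auto intro!: blinfun_eqI simp: blinfun.bilinear_simps)
  show "a * (b + c) = a * b + a * c" by transfer (auto intro!: blinfun_eqI simp: blinfun.bilinear_simps)
  show "r *\<^sub>R a * b = r *\<^sub>R (a * b)" by transfer (auto intro!: blinfun_eqI simp: blinfun.bilinear_simps)
  show "a * r *\<^sub>R b = r *\<^sub>R (a * b)" by transfer (auto intro!: blinfun_eqI simp: blinfun.bilinear_simps)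
  show "norm (a * b) \<le> norm a * norm b" by transfer (rule norm_blinfun_compose)
next
  fix U :: "'a bop set"
  show "open U = (\<forall>x\<in>U. \<forall>\<^sub>F (x', y) in uniformity. x' = x \<longrightarrow> y \<in> U)"
    by (simp add: open_bop_def uniformity_bop_def)
qed
end

instance bop :: (banach) banach
proof
  fix X :: "nat \<Rightarrow> 'a bop"
  assume "Cauchy X"
  hence "Cauchy (\<lambda>n. rep_bop (X n))"
    unfolding Cauchy_iff by (simp add: norm_bop.rep_eq minus_bop.rep_eq)
  then obtain L where L: "(\<lambda>n. rep_bop (X n)) \<longlonglongrightarrow> L" using Cauchy_convergent_iff convergent_def by blast
  have "X \<longlonglongrightarrow> abs_bop L"
    unfolding LIMSEQ_iff
  proof (intro allI impI)
    fix r :: real assume "0 < r"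
    with L obtain N where "\<forall>n\<ge>N. norm (rep_bop (X n) - L) < r" unfolding LIMSEQ_iff by blast
    thus "\<exists>N. \<forall>n\<ge>N. norm (X n - abs_bop L) < r"
      by (auto simp add: norm_bop.rep_eq minus_bop.rep_eq abs_bop_inverse)
  qed
  thus "convergent X" by (rule convergentI)
qed

lemma rep_bop_mult: "rep_bop (a * b) x = rep_bop a (rep_bop b x)"
  by (simp add: times_bop.rep_eq)
lemma rep_bop_add: "rep_bop (a + b) x = rep_bop a x + rep_bop b x"
  by (simp add: plus_bop.rep_eq blinfun.bilinear_simps)
lemma rep_bop_scaleR: "rep_bop (r *\<^sub>R a) x = r *\<^sub>R rep_bop a x"
  by (simp add: scaleR_bop.rep_eq blinfun.bilinear_simps)
lemma norm_rep_bop: "norm (rep_bop a x) \<le> norm a * norm x"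
  by (simp add: norm_bop.rep_eq norm_blinfun)

lemma bounded_linear_rep_bop_app: "bounded_linear (\<lambda>a::'a::real_normed_vector bop. rep_bop a x)"
  by (rule bounded_linear_intro[where K="norm x"])
     (simp_all add: rep_bop_add rep_bop_scaleR, metis norm_rep_bop mult.commute)


locale opexp =
  fixes A :: "'a::complex_hilbert \<Rightarrow> 'a"
  assumes bl: "bounded_linear A" and cl: "\<And>c x. A (scaleC c x) = scaleC c (A x)"
begin

lemma bl_pow: "bounded_linear (A ^^ n)"
proof (induction n)
  case 0 thus ?case by (simp add: id_def bounded_linear_ident)
next
  case (Suc n)
  show ?case using bounded_linear_compose[OF bl Suc] by (simp add: o_def)
qed

lemma cl_pow: "(A ^^ n) (scaleC c x) = scaleC c ((A ^^ n) x)"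
  by (induction n) (simp_all add: cl)

definition P :: "nat \<Rightarrow> 'a bop" where "P n = abs_bop (Blinfun (A ^^ n))"

lemma rep_P: "rep_bop (P n) x = (A ^^ n) x"
  by (simp add: P_def abs_bop_inverse bounded_linear_Blinfun_apply bl_pow)

lemma P_mult: "P m * P n = P (m + n)"
  by (rule rep_bop_inject[THEN iffD1], rule blinfun_eqI)
     (simp add: times_bop.rep_eq rep_P funpow_add)

lemma norm_P: "norm (P n) \<le> (norm (P 1)) ^ n"
proof (induction n)
  case 0
  have "norm (P 0) = onorm (\<lambda>x::'a. x)"
    by (simp add: norm_bop.rep_eq norm_blinfun.rep_eq P_def abs_bop_inverse bounded_linear_Blinfun_apply
         bounded_linear_ident id_def)
  thus ?case using onorm_id_le by simp
next
  case (Suc n)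
  have "norm (P (Suc n)) = norm (P 1 * P n)" by (simp add: P_mult)
  also have "\<dots> \<le> norm (P 1) * norm (P n)" by (rule norm_mult_ineq)
  also have "\<dots> \<le> norm (P 1) * norm (P 1) ^ n" using Suc by (simp add: mult_left_mono)
  finally show ?case by simp
qed

definition cf :: "real \<Rightarrow> nat \<Rightarrow> 'a bop" where "cf t n = (t ^ n / fact n) *\<^sub>R P n"

definition S :: "real \<Rightarrow> 'a bop" where "S t = (\<Sum>n. cf t n)"

lemma summable_norm_cf: "summable (\<lambda>n. norm (cf t n))"
proof (rule summable_comparison_test'[where N=0])
  show "summable (\<lambda>n. inverse (fact n) * (\<bar>t\<bar> * norm (P 1)) ^ n)" by (rule summable_exp)
  fix n :: nat
  have "norm (norm (cf t n)) = \<bar>t\<bar> ^ n / fact n * norm (P n)"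
    by (simp add: cf_def power_abs)
  also have "\<dots> \<le> \<bar>t\<bar> ^ n / fact n * norm (P 1) ^ n"
    by (intro mult_left_mono norm_P) auto
  also have "\<dots> = inverse (fact n) * (\<bar>t\<bar> * norm (P 1)) ^ n"
    by (simp add: power_mult_distrib field_simps)
  finally show "norm (norm (cf t n)) \<le> inverse (fact n) * (\<bar>t\<bar> * norm (P 1)) ^ n" .
qed

lemma summable_cf: "summable (cf t)"
  using summable_norm_cf summable_norm_cancel by blast

lemma rep_cf: "rep_bop (cf t n) x = (t ^ n / fact n) *\<^sub>R (A ^^ n) x"
  by (simp add: cf_def rep_bop_scaleR rep_P)

lemma rep_S: "rep_bop (S t) x = op_exp t A x"
proof -
  have "rep_bop (S t) x = (\<Sum>n. rep_bop (cf t n) x)"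
    unfolding S_def by (rule bounded_linear.suminf[OF bounded_linear_rep_bop_app summable_cf])
  thus ?thesis by (simp add: rep_cf op_exp_def)
qed

lemma summable_op_series: "summable (\<lambda>n. (t ^ n / fact n) *\<^sub>R (A ^^ n) x)"
proof -
  have "summable (\<lambda>n. rep_bop (cf t n) x)"
    by (rule bounded_linear.summable[OF bounded_linear_rep_bop_app summable_cf])
  thus ?thesis by (simp add: rep_cf)
qed

lemma S_add: "S s * S t = S (s + t)"
proof -
  have "S s * S t = (\<Sum>k. \<Sum>i\<le>k. cf s i * cf t (k - i))"
    unfolding S_def by (rule Cauchy_product[OF summable_norm_cf summable_norm_cf])
  also have "\<dots> = (\<Sum>k. cf (s + t) k)"
  proof (rule suminf_cong)
    fix k
    have "(\<Sum>i\<le>k. cf s i * cf t (k - i)) = (\<Sum>i\<le>k. (s ^ i / fact i * (t ^ (k - i) / fact (k - i))) *\<^sub>R P k)"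
      by (intro sum.cong refl) (auto simp: cf_def P_mult mult_ac)
    also have "\<dots> = (\<Sum>i\<le>k. s ^ i / fact i * (t ^ (k - i) / fact (k - i))) *\<^sub>R P k"
      by (simp add: scaleR_sum_left)
    also have "(\<Sum>i\<le>k. s ^ i / fact i * (t ^ (k - i) / fact (k - i))) = (s + t) ^ k / fact k"
    proof -
      have "(s + t) ^ k / fact k = (\<Sum>i\<le>k. of_nat (k choose i) * s ^ i * t ^ (k - i)) / fact k"
        by (simp add: binomial_ring)
      also have "\<dots> = (\<Sum>i\<le>k. of_nat (k choose i) * s ^ i * t ^ (k - i) / fact k)"
        by (simp add: sum_divide_distrib)
      also have "\<dots> = (\<Sum>i\<le>k. s ^ i / fact i * (t ^ (k - i) / fact (k - i)))"
        by (intro sum.cong refl) (simp add: binomial_fact field_simps)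
      finally show ?thesis by simp
    qed
    finally show "(\<Sum>i\<le>k. cf s i * cf t (k - i)) = cf (s + t) k" by (simp add: cf_def)
  qed
  finally show ?thesis by (simp add: S_def)
qed

lemma op_exp_add: "op_exp (s + t) A x = op_exp s A (op_exp t A x)"
  by (simp add: rep_S[symmetric] S_add[symmetric] rep_bop_mult)

lemma op_exp_bl: "bounded_linear (op_exp t A)"
proof -
  have "op_exp t A = blinfun_apply (rep_bop (S t))" by (simp add: fun_eq_iff rep_S)
  thus ?thesis by (simp add: blinfun.bounded_linear_right)
qed

lemma op_exp_cl: "op_exp t A (scaleC c x) = scaleC c (op_exp t A x)"
proof -
  have "op_exp t A (scaleC c x) = (\<Sum>n. scaleC c ((t ^ n / fact n) *\<^sub>R (A ^^ n) x))"
    by (simp add: op_exp_def cl_pow scaleC_scaleR)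
  also have "\<dots> = scaleC c (op_exp t A x)"
    unfolding op_exp_def by (rule bounded_linear.suminf[OF bounded_linear_scaleC summable_op_series, symmetric])
  finally show ?thesis .
qed

lemma op_exp_measurable: "(\<lambda>t. op_exp t A x) \<in> borel_measurable borel"
proof (rule borel_measurable_LIMSEQ_metric)
  fix N
  show "(\<lambda>t. \<Sum>n<N. (t ^ n / fact n) *\<^sub>R (A ^^ n) x) \<in> borel_measurable borel"
    by (intro borel_measurable_continuous_onI continuous_intros) auto
next
  fix t :: real
  show "(\<lambda>N. \<Sum>n<N. (t ^ n / fact n) *\<^sub>R (A ^^ n) x) \<longlonglongrightarrow> op_exp t A x"
    unfolding op_exp_def by (rule summable_LIMSEQ[OF summable_op_series])
qed

lemma norm_op_exp_onorm: "onorm (op_exp t A) = norm (S t)"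
  by (simp add: norm_bop.rep_eq norm_blinfun.rep_eq rep_S[abs_def])

end


lemma infsum_sum_ennreal:
  fixes X :: "nat \<Rightarrow> 'b \<Rightarrow> ennreal"
  shows "(\<Sum>k<n. infsum (X k) G) = infsum (\<lambda>g. \<Sum>k<n. X k g) G"
proof (induction n)
  case 0 thus ?case by simp
next
  case (Suc n)
  have "(\<Sum>k<Suc n. infsum (X k) G) = infsum (\<lambda>g. \<Sum>k<n. X k g) G + infsum (X n) G"
    using Suc by simp
  also have "\<dots> = infsum (\<lambda>g. (\<Sum>k<n. X k g) + X n g) G"
    by (rule infsum_add[symmetric]) (rule nonneg_summable_on_complete, simp)+
  finally show ?case by simp
qed

context opexp
begin

definition en :: "'a \<Rightarrow> 'a \<Rightarrow> real \<Rightarrow> ennreal" where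
  "en f g t = ennreal ((cmod (cinner f (op_exp t A g)))\<^sup>2)"

lemma en_meas[measurable]: "en f g \<in> borel_measurable borel"
proof -
  have "(\<lambda>t. cinner f (op_exp t A g)) \<in> borel_measurable borel"
    by (rule measurable_compose[OF op_exp_measurable borel_measurable_continuous_onI])
       (rule linear_continuous_on[OF bounded_linear_cinner_right])
  hence [measurable]: "(\<lambda>t. cinner f (op_exp t A g)) \<in> borel_measurable borel" .
  show ?thesis unfolding en_def by measurable
qed

lemma shift_eq:
  assumes h: "\<And>x. cinner f (op_exp s A x) = cinner h x"
  shows "(\<integral>\<^sup>+ r\<in>{0..L}. en h g r \<partial>lborel) = (\<integral>\<^sup>+ t\<in>{s..s+L}. en f g t \<partial>lborel)"
proof -
  have e: "en h g r = en f g (s + r)" for r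
    by (simp add: en_def op_exp_add h[symmetric])
  have "(\<integral>\<^sup>+ t\<in>{s..s+L}. en f g t \<partial>lborel)
      = ennreal \<bar>1\<bar> * (\<integral>\<^sup>+ x. en f g (s + 1 * x) * indicator {s..s+L} (s + 1 * x) \<partial>lborel)"
    by (rule nn_integral_real_affine) simp_all
  also have "\<dots> = (\<integral>\<^sup>+ r\<in>{0..L}. en h g r \<partial>lborel)"
    by (simp add: e indicator_def)
  finally show ?thesis by simp
qed

lemma indicator_sum_le:
  assumes L: "0 < L"
  shows "(\<Sum>k<n. indicator {2 * real k * L .. (2 * real k + 1) * L} t) \<le> (indicator {0..} t :: ennreal)"
proof -
  have disj: "disjoint_family_on (\<lambda>k. {2 * real k * L .. (2 * real k + 1) * L}) {..<n}"
    unfolding disjoint_family_on_def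
  proof (intro ballI impI)
    fix k k' :: nat assume "k \<noteq> k'"
    hence "k + 1 \<le> k' \<or> k' + 1 \<le> k" by auto
    hence "(2 * real k + 1) * L < 2 * real k' * L \<or> (2 * real k' + 1) * L < 2 * real k * L"
    proof
      assume "k + 1 \<le> k'"
      hence "2 * real k + 1 < 2 * real k'" by linarith
      thus ?thesis using L by simp
    next
      assume "k' + 1 \<le> k"
      hence "2 * real k' + 1 < 2 * real k" by linarith
      thus ?thesis using L by simp
    qed
    thus "{2 * real k * L .. (2 * real k + 1) * L} \<inter> {2 * real k' * L .. (2 * real k' + 1) * L} = {}"
      by auto
  qed
  have "(\<Sum>k<n. indicator {2 * real k * L .. (2 * real k + 1) * L} t :: ennreal)
      = indicator (\<Union>k<n. {2 * real k * L .. (2 * real k + 1) * L}) t"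
    by (rule indicator_UN_disjoint[symmetric]) (simp_all add: disj)
  also have "\<dots> \<le> indicator {0..} t"
    using L by (intro indicator_leI) (auto intro: order_trans[rotated] simp: zero_le_mult_iff)
  finally show ?thesis .
qed

lemma sum_integrals_le:
  assumes L: "0 < L"
  shows "(\<Sum>k<n. \<integral>\<^sup>+ t\<in>{2 * real k * L .. 2 * real k * L + L}. en f g t \<partial>lborel)
         \<le> (\<integral>\<^sup>+ t\<in>{0..}. en f g t \<partial>lborel)"
proof -
  have "(\<Sum>k<n. \<integral>\<^sup>+ t\<in>{2 * real k * L .. 2 * real k * L + L}. en f g t \<partial>lborel)
      = (\<integral>\<^sup>+ t. (\<Sum>k<n. en f g t * indicator {2 * real k * L .. 2 * real k * L + L} t) \<partial>lborel)"
    by (rule nn_integral_sum[symmetric]) measurable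
  also have "\<dots> \<le> (\<integral>\<^sup>+ t\<in>{0..}. en f g t \<partial>lborel)"
  proof (rule nn_integral_mono)
    fix t
    have "(\<Sum>k<n. en f g t * indicator {2 * real k * L .. 2 * real k * L + L} t)
        = en f g t * (\<Sum>k<n. indicator {2 * real k * L .. (2 * real k + 1) * L} t)"
      by (simp add: sum_distrib_left algebra_simps)
    also have "\<dots> \<le> en f g t * indicator {0..} t"
      by (intro mult_left_mono indicator_sum_le L) simp
    finally show "(\<Sum>k<n. en f g t * indicator {2 * real k * L .. 2 * real k * L + L} t)
        \<le> en f g t * indicator {0..} t" .
  qed
  finally show ?thesis .
qed

end


context opexp
begin

lemma orbit_energy_en: "orbit_energy A G T h = (\<Sum>\<^sub>\<infinity>g\<in>G. \<integral>\<^sup>+ t\<in>T. en h g t \<partial>lborel)"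
  by (simp add: orbit_energy_def en_def)

lemma main:
  assumes L: "0 < L" and c: "0 < c" and C: "0 < C"
    and frame: "\<And>h. ennreal (c * (norm h)\<^sup>2) \<le> orbit_energy A G {0..L} h"
    and upper: "\<And>f. orbit_energy A G {0..} f \<le> ennreal (C * (norm f)\<^sup>2)"
  shows "exp_stable A"
proof -
  define T where "T = (\<lambda>t. op_exp t A)"
  have adj_ex: "\<exists>h. \<forall>x. cinner f (T s x) = cinner h x" for s f
  proof -
    have bl1: "bounded_linear (\<lambda>x. cinner (T s x) f)"
      unfolding T_def by (rule bounded_linear_compose[OF bounded_linear_cinner_left op_exp_bl])
    have cl1: "cinner (T s (scaleC a x)) f = a * cinner (T s x) f" for a x
      by (simp add: T_def op_exp_cl cinner_scaleC_left)
    obtain z where z: "\<And>x. cinner (T s x) f = cinner x z" using riesz[OF bl1 cl1] by blast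
    show ?thesis
    proof (rule exI[of _ z], intro allI)
      fix x
      have "cinner f (T s x) = cnj (cinner (T s x) f)" by (rule cinner_commute)
      also have "\<dots> = cnj (cinner x z)" by (simp only: z)
      also have "\<dots> = cinner z x" by (rule cinner_commute[symmetric])
      finally show "cinner f (T s x) = cinner z x" .
    qed
  qed
  define adj where "adj s f = (SOME h. \<forall>x. cinner f (T s x) = cinner h x)" for s f
  have adj0: "\<forall>x. cinner f (T s x) = cinner (adj s f) x" for s f
    unfolding adj_def by (rule someI_ex[OF adj_ex])
  have adj: "cinner f (T s x) = cinner (adj s f) x" for s f x
    using adj0 by blast
  have en_shift: "orbit_energy A G {0..L} (adj s f) = (\<Sum>\<^sub>\<infinity>g\<in>G. \<integral>\<^sup>+ t\<in>{s..s+L}. en f g t \<partial>lborel)" for s f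
    unfolding orbit_energy_en by (intro infsum_cong shift_eq) (simp add: adj[unfolded T_def])
  have U: "c * (norm (adj s f))\<^sup>2 \<le> C * (norm f)\<^sup>2" if s: "0 \<le> s" for s f
  proof -
    have "ennreal (c * (norm (adj s f))\<^sup>2) \<le> orbit_energy A G {0..L} (adj s f)"
      by (rule frame)
    also have "\<dots> = (\<Sum>\<^sub>\<infinity>g\<in>G. \<integral>\<^sup>+ t\<in>{s..s+L}. en f g t \<partial>lborel)"
      by (rule en_shift)
    also have "\<dots> \<le> (\<Sum>\<^sub>\<infinity>g\<in>G. \<integral>\<^sup>+ t\<in>{0..}. en f g t \<partial>lborel)"
    proof (rule infsum_mono)
      show "(\<lambda>g. \<integral>\<^sup>+ t\<in>{s..s+L}. en f g t \<partial>lborel) summable_on G"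
        by (rule nonneg_summable_on_complete) simp
      show "(\<lambda>g. \<integral>\<^sup>+ t\<in>{0..}. en f g t \<partial>lborel) summable_on G"
        by (rule nonneg_summable_on_complete) simp
      fix g
      show "(\<integral>\<^sup>+ t\<in>{s..s+L}. en f g t \<partial>lborel) \<le> (\<integral>\<^sup>+ t\<in>{0..}. en f g t \<partial>lborel)"
        using s by (intro nn_integral_mono mult_left_mono indicator_leI) auto
    qed
    also have "\<dots> \<le> ennreal (C * (norm f)\<^sup>2)" using upper[of f] by (simp add: orbit_energy_en)
    finally show ?thesis using C by simp
  qed
  define M where "M = sqrt (C / c)"
  have M0: "0 < M" using c C by (simp add: M_def)
  have MM: "M\<^sup>2 = C / c" using c C by (simp add: M_def)
  have adjM: "norm (adj s y) \<le> M * norm y" if "0 \<le> s" for s y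
  proof -
    have "(norm (adj s y))\<^sup>2 = (c * (norm (adj s y))\<^sup>2) / c" using c by simp
    also have "\<dots> \<le> (C * (norm y)\<^sup>2) / c" using c U[OF that, of y] by (intro divide_right_mono) auto
    also have "\<dots> = (C / c) * (norm y)\<^sup>2" by simp
    also have "\<dots> = (M * norm y)\<^sup>2" by (simp add: MM power_mult_distrib)
    finally have "(norm (adj s y))\<^sup>2 \<le> (M * norm y)\<^sup>2" .
    thus ?thesis by (rule power2_le_imp_le) (use M0 in simp)
  qed
  have Sum: "c * (\<Sum>k<n. (norm (adj (2 * real k * L) f))\<^sup>2) \<le> C * (norm f)\<^sup>2" for n f
  proof -
    have "ennreal (c * (\<Sum>k<n. (norm (adj (2 * real k * L) f))\<^sup>2))
        = (\<Sum>k<n. ennreal (c * (norm (adj (2 * real k * L) f))\<^sup>2))"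
      using c by (simp add: sum_distrib_left)
    also have "\<dots> \<le> (\<Sum>k<n. orbit_energy A G {0..L} (adj (2 * real k * L) f))"
      by (intro sum_mono frame)
    also have "\<dots> = (\<Sum>k<n. \<Sum>\<^sub>\<infinity>g\<in>G. \<integral>\<^sup>+ t\<in>{2 * real k * L..2 * real k * L + L}. en f g t \<partial>lborel)"
      by (simp add: en_shift)
    also have "\<dots> = (\<Sum>\<^sub>\<infinity>g\<in>G. \<Sum>k<n. \<integral>\<^sup>+ t\<in>{2 * real k * L..2 * real k * L + L}. en f g t \<partial>lborel)"
      by (rule infsum_sum_ennreal)
    also have "\<dots> \<le> (\<Sum>\<^sub>\<infinity>g\<in>G. \<integral>\<^sup>+ t\<in>{0..}. en f g t \<partial>lborel)"
    proof (rule infsum_mono)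
      show "(\<lambda>g. \<Sum>k<n. \<integral>\<^sup>+ t\<in>{2 * real k * L..2 * real k * L + L}. en f g t \<partial>lborel) summable_on G"
        by (rule nonneg_summable_on_complete) simp
      show "(\<lambda>g. \<integral>\<^sup>+ t\<in>{0..}. en f g t \<partial>lborel) summable_on G"
        by (rule nonneg_summable_on_complete) simp
      fix g
      show "(\<Sum>k<n. \<integral>\<^sup>+ t\<in>{2 * real k * L..2 * real k * L + L}. en f g t \<partial>lborel)
          \<le> (\<integral>\<^sup>+ t\<in>{0..}. en f g t \<partial>lborel)"
        by (rule sum_integrals_le[OF L])
    qed
    also have "\<dots> \<le> ennreal (C * (norm f)\<^sup>2)" using upper[of f] by (simp add: orbit_energy_en)
    finally show ?thesis using C by simp
  qed
  have compose: "adj (a + b) f = adj b (adj a f)" for a b f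
  proof (rule cinner_eq_imp_eq)
    fix x
    have "cinner (adj (a + b) f) x = cinner f (T a (T b x))"
      by (simp add: adj[symmetric] T_def op_exp_add)
    also have "\<dots> = cinner (adj b (adj a f)) x" by (simp add: adj)
    finally show "cinner (adj (a + b) f) x = cinner (adj b (adj a f)) x" .
  qed
  have decay: "real n * (norm (adj (2 * real n * L) f))\<^sup>2 \<le> M ^ 4 * (norm f)\<^sup>2" for n f
  proof -
    have k: "(norm (adj (2 * real n * L) f))\<^sup>2 \<le> M\<^sup>2 * (norm (adj (2 * real k * L) f))\<^sup>2" if "k < n" for k
    proof -
      have "2 * real n * L = 2 * real k * L + 2 * real (n - k) * L" using that by (simp add: of_nat_diff algebra_simps)
      hence "adj (2 * real n * L) f = adj (2 * real (n - k) * L) (adj (2 * real k * L) f)"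
        by (simp add: compose)
      hence "norm (adj (2 * real n * L) f) \<le> M * norm (adj (2 * real k * L) f)"
        using adjM L by simp
      hence "(norm (adj (2 * real n * L) f))\<^sup>2 \<le> (M * norm (adj (2 * real k * L) f))\<^sup>2"
        by (intro power_mono) auto
      thus ?thesis by (simp add: power_mult_distrib)
    qed
    have "real n * (norm (adj (2 * real n * L) f))\<^sup>2 = (\<Sum>k<n. (norm (adj (2 * real n * L) f))\<^sup>2)" by simp
    also have "\<dots> \<le> (\<Sum>k<n. M\<^sup>2 * (norm (adj (2 * real k * L) f))\<^sup>2)" by (intro sum_mono k) simp
    also have "\<dots> = M\<^sup>2 / c * (c * (\<Sum>k<n. (norm (adj (2 * real k * L) f))\<^sup>2))"
      using c by (simp add: sum_distrib_left)
    also have "\<dots> \<le> M\<^sup>2 / c * (C * (norm f)\<^sup>2)"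
      using c by (intro mult_left_mono Sum) auto
    also have "\<dots> = M\<^sup>2 * (C / c) * (norm f)\<^sup>2" by simp
    also have "\<dots> = M ^ 4 * (norm f)\<^sup>2" by (simp only: MM[symmetric]) (simp add: power4_eq_xxxx power2_eq_square)
    finally show ?thesis .
  qed
  define N where "N = nat \<lceil>4 * M ^ 4\<rceil> + 1"
  have N: "4 * M ^ 4 \<le> real N" "0 < N"
  proof -
    have h: "4 * M ^ 4 \<le> real_of_int \<lceil>4 * M ^ 4\<rceil> + 1"
      using le_of_int_ceiling[of "4 * M ^ 4"] by linarith
    show "4 * M ^ 4 \<le> real N" "0 < N" using h unfolding N_def of_nat_add by simp_all
  qed
  define \<tau> where "\<tau> = 2 * real N * L"
  have \<tau>0: "0 < \<tau>" using N L by (simp add: \<tau>_def)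
  have half: "norm (adj \<tau> f) \<le> 1/2 * norm f" for f
  proof -
    have "real N * (norm (adj \<tau> f))\<^sup>2 \<le> M ^ 4 * (norm f)\<^sup>2" unfolding \<tau>_def by (rule decay)
    also have "\<dots> \<le> real N / 4 * (norm f)\<^sup>2" using N(1) by (intro mult_right_mono) simp_all
    also have "\<dots> = real N * ((norm f)\<^sup>2 / 4)" by simp
    finally have "(norm (adj \<tau> f))\<^sup>2 \<le> (norm f)\<^sup>2 / 4"
      by (rule mult_left_le_imp_le) (use N in simp)
    also have "\<dots> = (1/2 * norm f)\<^sup>2" by (simp add: power2_eq_square)
    finally have "(norm (adj \<tau> f))\<^sup>2 \<le> (1/2 * norm f)\<^sup>2" .
    thus ?thesis by (rule power2_le_imp_le) simp
  qed
  have normT: "norm (T s x) \<le> B * norm x" if B: "0 \<le> B" "\<And>y. norm (adj s y) \<le> B * norm y" for s x B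
  proof -
    have "(norm (T s x))\<^sup>2 = Re (cinner (T s x) (T s x))" by (simp add: cinner_self_Re)
    also have "\<dots> = Re (cinner (adj s (T s x)) x)" by (simp add: adj)
    also have "\<dots> \<le> cmod (cinner (adj s (T s x)) x)" by (rule complex_Re_le_cmod)
    also have "\<dots> \<le> norm (adj s (T s x)) * norm x" by (rule cinner_cs)
    also have "\<dots> \<le> B * norm (T s x) * norm x" using B by (intro mult_right_mono) auto
    finally have "norm (T s x) * norm (T s x) \<le> norm (T s x) * (B * norm x)"
      by (simp add: power2_eq_square mult_ac)
    show ?thesis
    proof (cases "norm (T s x) = 0")
      case True thus ?thesis using B by simp
    next
      case False
      hence "0 < norm (T s x)" by simp
      thus ?thesis
        by (rule mult_left_le_imp_le[OF \<open>norm (T s x) * norm (T s x) \<le> norm (T s x) * (B * norm x)\<close>])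
    qed
  qed
  have Tr: "norm (T r x) \<le> M * norm x" if "0 \<le> r" for r x
    using M0 adjM[OF that] by (intro normT) auto
  have Ttau: "norm (T \<tau> x) \<le> 1/2 * norm x" for x
    using half by (intro normT) auto
  have iter: "norm (T (real q * \<tau> + r) x) \<le> M * (1/2) ^ q * norm x" if r: "0 \<le> r" for q r x
  proof (induction q arbitrary: x)
    case 0 thus ?case using Tr[OF r] by simp
  next
    case (Suc q)
    have "T (real (Suc q) * \<tau> + r) x = T \<tau> (T (real q * \<tau> + r) x)"
      by (simp add: T_def op_exp_add[symmetric] algebra_simps)
    also have "norm \<dots> \<le> 1/2 * norm (T (real q * \<tau> + r) x)" by (rule Ttau)
    also have "\<dots> \<le> 1/2 * (M * (1/2) ^ q * norm x)" using Suc by simp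
    finally show ?case by simp
  qed
  define \<omega> where "\<omega> = - ln 2 / \<tau>"
  show ?thesis unfolding exp_stable_def
  proof (intro exI conjI allI impI)
    show "1 \<le> max 1 (2 * M)" by simp
    show "\<omega> < 0" using \<tau>0 by (simp add: \<omega>_def)
    fix t :: real assume t: "0 \<le> t"
    define q where "q = nat \<lfloor>t / \<tau>\<rfloor>"
    have q1: "real q \<le> t / \<tau>" using t \<tau>0 by (simp add: q_def)
    have q2: "t / \<tau> - 1 \<le> real q" using t \<tau>0 by (simp add: q_def)
    define r where "r = t - real q * \<tau>"
    have r0: "0 \<le> r" using q1 \<tau>0 by (simp add: r_def field_simps)
    have tq: "t = real q * \<tau> + r" by (simp add: r_def)
    have on: "onorm (op_exp t A) \<le> M * (1/2) ^ q"
      using iter[OF r0] M0 by (intro onorm_bound) (auto simp: tq T_def)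
    have "(1/2::real) ^ q = exp (real q * (- ln 2))"
      by (simp add: exp_of_nat_mult exp_minus power_one_over inverse_eq_divide)
    also have "\<dots> \<le> exp (ln 2 + \<omega> * t)"
    proof -
      have "ln 2 * (t / \<tau> - 1) \<le> ln 2 * real q" using q2 by (intro mult_left_mono) auto
      hence "real q * (- ln 2) \<le> ln 2 + \<omega> * t" by (simp add: \<omega>_def field_simps)
      thus ?thesis by simp
    qed
    also have "\<dots> = 2 * exp (\<omega> * t)" by (simp add: exp_add)
    finally have "M * (1/2) ^ q \<le> M * (2 * exp (\<omega> * t))" using M0 by (intro mult_left_mono) auto
    with on have "onorm (op_exp t A) \<le> (2 * M) * exp (\<omega> * t)" by simp
    also have "\<dots> \<le> max 1 (2 * M) * exp (\<omega> * t)" by (intro mult_right_mono) auto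
    finally show "onorm (op_exp t A) \<le> max 1 (2 * M) * exp (\<omega> * t)" .
  qed
qed

end


theorem mainTheorem4:
  fixes A :: "'a::complex_hilbert \<Rightarrow> 'a" and G :: "'a set" and L :: real
  assumes "separable_type TYPE('a)"
    and "bounded_clinear_op A"
    and "countable G"
    and "bessel_system G"
    and "\<exists>C>0. \<forall>f. orbit_energy A G {0..} f \<le> ennreal (C * (norm f)\<^sup>2)"
    and "0 < L"
    and "semi_continuous_frame A G {0..L}"
  shows "exp_stable A"
proof -
  from assms(2) have bl: "bounded_linear A" and cl: "\<And>c x. A (scaleC c x) = scaleC c (A x)"
    unfolding bounded_clinear_op_def by auto
  interpret opexp A by (rule opexp.intro[OF bl cl])
  from assms(7) obtain c where c: "c > 0"
    and fr: "\<And>f. ennreal (c * (norm f)\<^sup>2) \<le> orbit_energy A G {0..L} f"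
    unfolding semi_continuous_frame_def by blast
  from assms(5) obtain C where C: "C > 0"
    and up: "\<And>f. orbit_energy A G {0..} f \<le> ennreal (C * (norm f)\<^sup>2)" by blast
  show ?thesis by (rule main[OF assms(6) c C fr up])
qed

end
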